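(* Let $\nu\ge1$, $d:\mathbb{Z}^\nu\to\mathbb{C}$ bounded, $J=J_0+D$ on $\ell^2(\mathbb{Z}^\nu)$. (i) If $a\in\mathbb{R}$ is not an eigenvalue of $J_0+\Re(D)$, then $J$ has no boundary eigenvalue with real part $a$. (ii) Let $b\in\mathbb{R}$. If $\Im(d(k))\neq b$ for all $k\in\mathbb{Z}^\nu$, then $J$ has no boundary eigenvalue with imaginary part $b$.
   Context: $J_0$ is the discrete Laplacian on $\ell^2(\mathbb{Z}^\nu)$: $(J_0u)(k)=\sum_{l\in\mathbb{Z}^\nu:\|l\|_1=1}u(k+l)$, where $\|l\|_1=\sum_{j=1}^\nu|l_j|$. For a bounded $d:\mathbb{Z}^\nu\to\mathbb{C}$, $D$ is multiplication by $d$, and $\Re(D)$, $\Im(D)$ are multiplication by $\Re(d(k))$, $\Im(d(k))$. The numerical range is $\operatorname{Num}(J)=\{\langle Ju,u\rangle:\|u\|=1\}$, and a boundary eigenvalue of $J$ is an eigenvalue of $J$ lying in the topological boundary of $\operatorname{Num}(J)$. *)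

theory Defs
  imports "HOL-Analysis.Analysis"
begin

text \<open>Lattice sites of Z^nu are modelled as int ^ 'n for a finite index type 'n
  (so nu = CARD('n) \<ge> 1). Elements of l^2 are square-summable functions.\<close>

definition l2 :: "('k \<Rightarrow> complex) set" where
  "l2 = {u. (\<lambda>k. (norm (u k))\<^sup>2) summable_on UNIV}"

definition l2_inner :: "('k \<Rightarrow> complex) \<Rightarrow> ('k \<Rightarrow> complex) \<Rightarrow> complex" where
  "l2_inner u v = infsum (\<lambda>k. u k * cnj (v k)) UNIV"

definition l2_norm :: "('k \<Rightarrow> complex) \<Rightarrow> real" where
  "l2_norm u = sqrt (infsum (\<lambda>k. (norm (u k))\<^sup>2) UNIV)"

definition lap :: "(int ^ 'n \<Rightarrow> complex) \<Rightarrow> int ^ 'n \<Rightarrow> complex" where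
  "lap u k = (\<Sum>l\<in>{l :: int ^ 'n. (\<Sum>i\<in>UNIV. \<bar>l $ i\<bar>) = 1}. u (k + l))"

definition jacobi :: "(int ^ 'n \<Rightarrow> complex) \<Rightarrow> (int ^ 'n \<Rightarrow> complex) \<Rightarrow> int ^ 'n \<Rightarrow> complex" where
  "jacobi d u = (\<lambda>k. lap u k + d k * u k)"

definition is_eigenvalue :: "(('k \<Rightarrow> complex) \<Rightarrow> ('k \<Rightarrow> complex)) \<Rightarrow> complex \<Rightarrow> bool" where
  "is_eigenvalue A z \<longleftrightarrow> (\<exists>u\<in>l2. u \<noteq> (\<lambda>_. 0) \<and> A u = (\<lambda>k. z * u k))"

definition numerical_range :: "(('k \<Rightarrow> complex) \<Rightarrow> ('k \<Rightarrow> complex)) \<Rightarrow> complex set" where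
  "numerical_range A = {l2_inner (A u) u | u. u \<in> l2 \<and> l2_norm u = 1}"

definition boundary_eigenvalue :: "(('k \<Rightarrow> complex) \<Rightarrow> ('k \<Rightarrow> complex)) \<Rightarrow> complex \<Rightarrow> bool" where
  "boundary_eigenvalue A z \<longleftrightarrow> is_eigenvalue A z \<and> z \<in> frontier (numerical_range A)"

end

theory Submission
  imports Defs
begin

lemma l2_D: "u \<in> l2 \<Longrightarrow> (\<lambda>k. (norm (u k))\<^sup>2) summable_on UNIV"
  by (simp add: l2_def)

lemma ab_le: "0 \<le> a \<Longrightarrow> 0 \<le> b \<Longrightarrow> (a::real) * b \<le> a\<^sup>2 + b\<^sup>2"
  using sum_squares_bound[of a b] mult_nonneg_nonneg[of a b] by linarith

lemma sq_add_le: "(a + b)\<^sup>2 \<le> 2*a\<^sup>2 + 2*(b::real)\<^sup>2"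
  using power2_sum[of a b] sum_squares_bound[of a b] by linarith

lemma real_nonneg_cmp:
  fixes f g :: "'k \<Rightarrow> real"
  assumes "g summable_on UNIV" "\<And>k. 0 \<le> f k" "\<And>k. f k \<le> g k"
  shows "f summable_on UNIV"
proof -
  have "(\<lambda>k. norm (g k)) summable_on UNIV" using assms(1) summable_on_iff_abs_summable_on_real by blast
  then have "(\<lambda>k. norm (f k)) summable_on UNIV"
    by (rule Infinite_Sum.abs_summable_on_comparison_test) (use assms in \<open>auto intro: order_trans[OF _ abs_ge_self]\<close>)
  then show ?thesis using summable_on_iff_abs_summable_on_real by blast
qed

lemma l2_add: assumes "u \<in> l2" "v \<in> l2" shows "(\<lambda>k. u k + v k) \<in> l2"
proof -
  have "(\<lambda>k. 2 * (norm (u k))\<^sup>2 + 2 * (norm (v k))\<^sup>2) summable_on UNIV"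
    using assms by (intro summable_on_add summable_on_cmult_right) (auto simp: l2_def)
  moreover have le: "(norm (u k + v k))\<^sup>2 \<le> 2 * (norm (u k))\<^sup>2 + 2 * (norm (v k))\<^sup>2" for k
  proof -
    have "norm (u k + v k) \<le> norm (u k) + norm (v k)" by (rule norm_triangle_ineq)
    then have "(norm (u k + v k))\<^sup>2 \<le> (norm (u k) + norm (v k))\<^sup>2"
      by (simp add: power_mono)
    also have "\<dots> \<le> 2 * (norm (u k))\<^sup>2 + 2 * (norm (v k))\<^sup>2"
      by (rule sq_add_le)
    finally show ?thesis .
  qed
  ultimately show ?thesis unfolding l2_def
    using real_nonneg_cmp[of "\<lambda>k. 2 * (norm (u k))\<^sup>2 + 2 * (norm (v k))\<^sup>2" "\<lambda>k. (norm (u k + v k))\<^sup>2"]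
    by simp
qed

lemma l2_scale: assumes "u \<in> l2" shows "(\<lambda>k. c * u k) \<in> l2"
proof -
  have "(\<lambda>k. (norm c)\<^sup>2 * (norm (u k))\<^sup>2) summable_on UNIV"
    using assms by (intro summable_on_cmult_right) (auto simp: l2_def)
  then show ?thesis by (simp add: l2_def norm_mult power_mult_distrib)
qed

lemma l2_lin: "u \<in> l2 \<Longrightarrow> v \<in> l2 \<Longrightarrow> (\<lambda>k. p * u k + q * v k) \<in> l2"
  using l2_add[OF l2_scale l2_scale] by blast

lemma l2_zero: "(\<lambda>_. 0) \<in> l2" by (simp add: l2_def)

lemma l2_sum: assumes "\<And>l. l \<in> L \<Longrightarrow> f l \<in> l2" shows "(\<lambda>k. \<Sum>l\<in>L. f l k) \<in> l2"
proof (cases "finite L")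
  case True then show ?thesis using assms
  proof (induction L rule: finite_induct)
    case empty then show ?case by (simp add: l2_zero)
  next
    case (insert x F) then show ?case by (simp add: l2_add)
  qed
next
  case False then show ?thesis by (simp add: l2_zero)
qed

lemma l2_delta: "(\<lambda>j. if j = m then (1::complex) else 0) \<in> l2"
proof -
  define F where "F = (\<lambda>j. (norm (if j = m then (1::complex) else 0))\<^sup>2)"
  have "F summable_on {m}" by simp
  moreover have "F summable_on {m} \<longleftrightarrow> F summable_on UNIV"
    by (rule summable_on_cong_neutral) (auto simp: F_def)
  ultimately show ?thesis unfolding l2_def F_def by simp
qed

lemma prod_summable: assumes "u \<in> l2" "v \<in> l2"
  shows "(\<lambda>k. u k * cnj (v k)) summable_on UNIV"
proof -
  have g: "(\<lambda>k. norm ((norm (u k))\<^sup>2 + (norm (v k))\<^sup>2)) summable_on UNIV"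
  proof -
    have "(\<lambda>k. (norm (u k))\<^sup>2 + (norm (v k))\<^sup>2) summable_on UNIV"
      by (intro summable_on_add l2_D assms)
    then show ?thesis by (metis summable_on_iff_abs_summable_on_real)
  qed
  have "(\<lambda>k. norm (u k * cnj (v k))) summable_on UNIV"
  proof (rule Infinite_Sum.abs_summable_on_comparison_test[OF g])
    fix k
    have "norm (u k) * norm (v k) \<le> (norm (u k))\<^sup>2 + (norm (v k))\<^sup>2"
      by (rule ab_le) auto
    then show "norm (u k * cnj (v k)) \<le> norm ((norm (u k))\<^sup>2 + (norm (v k))\<^sup>2)"
      by (simp add: norm_mult)
  qed
  then show ?thesis by (rule abs_summable_summable)
qed

lemma inner_lin: assumes "a \<in> l2" "b \<in> l2" "v \<in> l2"
  shows "l2_inner (\<lambda>k. p * a k + q * b k) v = p * l2_inner a v + q * l2_inner b v"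
proof -
  have "l2_inner (\<lambda>k. p * a k + q * b k) v = infsum (\<lambda>k. p * (a k * cnj (v k)) + q * (b k * cnj (v k))) UNIV"
    unfolding l2_inner_def by (simp add: algebra_simps)
  also have "\<dots> = infsum (\<lambda>k. p * (a k * cnj (v k))) UNIV + infsum (\<lambda>k. q * (b k * cnj (v k))) UNIV"
    by (intro infsum_add summable_on_cmult_right prod_summable assms)
  also have "\<dots> = p * l2_inner a v + q * l2_inner b v"
    unfolding l2_inner_def
    by (subst infsum_cmult_right, simp add: prod_summable assms)+ simp
  finally show ?thesis .
qed

lemma inner_cnj: "l2_inner u v = cnj (l2_inner v u)"
  unfolding l2_inner_def by (simp flip: infsum_cnj add: mult.commute)

lemma inner_lin2: assumes "a \<in> l2" "b \<in> l2" "v \<in> l2"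
  shows "l2_inner v (\<lambda>k. p * a k + q * b k) = cnj p * l2_inner v a + cnj q * l2_inner v b"
  by (subst inner_cnj, simp add: inner_lin assms, simp add: inner_cnj[of a v] inner_cnj[of b v])

lemma inner_zero: "l2_inner (\<lambda>_. 0) v = 0"
  by (simp add: l2_inner_def)

lemma inner_self: assumes "f \<in> l2"
  shows "l2_inner f f = complex_of_real (infsum (\<lambda>k. (norm (f k))\<^sup>2) UNIV)"
proof -
  have s: "(\<lambda>k. f k * cnj (f k)) summable_on UNIV" using prod_summable assms by blast
  have r: "Re (f k * cnj (f k)) = (norm (f k))\<^sup>2" for k
    by (metis complex_norm_square Re_complex_of_real)
  have i: "Im (f k * cnj (f k)) = 0" for k
    by (metis complex_norm_square Im_complex_of_real)
  have "Re (l2_inner f f) = infsum (\<lambda>k. (norm (f k))\<^sup>2) UNIV"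
    unfolding l2_inner_def by (simp only: infsum_Re[OF s, symmetric] r)
  moreover have "Im (l2_inner f f) = 0"
    unfolding l2_inner_def by (simp only: infsum_Im[OF s, symmetric] i infsum_0_simp)
  ultimately show ?thesis by (simp add: complex_eq_iff)
qed

lemma inner_sum: assumes "\<And>l. l \<in> L \<Longrightarrow> f l \<in> l2" "v \<in> l2"
  shows "l2_inner (\<lambda>k. \<Sum>l\<in>L. f l k) v = (\<Sum>l\<in>L. l2_inner (f l) v)"
proof (cases "finite L")
  case True then show ?thesis using assms(1)
  proof (induction L rule: finite_induct)
    case empty then show ?case by (simp add: inner_zero)
  next
    case (insert x F)
    have "l2_inner (\<lambda>k. \<Sum>l\<in>insert x F. f l k) v = l2_inner (\<lambda>k. 1 * f x k + 1 * (\<Sum>l\<in>F. f l k)) v"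
      using insert by simp
    also have "\<dots> = l2_inner (f x) v + l2_inner (\<lambda>k. \<Sum>l\<in>F. f l k) v"
      using insert assms(2) by (subst inner_lin) (auto intro: l2_sum)
    finally show ?case using insert by simp
  qed
next
  case False then show ?thesis by (simp add: inner_zero)
qed

lemma inner_delta: "l2_inner (\<lambda>j. if j = m then (1::complex) else 0) v = cnj (v m)"
proof -
  have "l2_inner (\<lambda>j. if j = m then (1::complex) else 0) v = infsum (\<lambda>j. (if j = m then (1::complex) else 0) * cnj (v j)) {m}"
    unfolding l2_inner_def by (rule infsum_cong_neutral) auto
  then show ?thesis by simp
qed

lemma lap_lin: "lap (\<lambda>k. p * u k + q * v k) = (\<lambda>k. p * lap u k + q * lap v k)"
  unfolding lap_def by (auto simp: sum.distrib sum_distrib_left)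

lemma jacobi_lin: "jacobi d (\<lambda>k. p * u k + q * v k) = (\<lambda>k. p * jacobi d u k + q * jacobi d v k)"
  unfolding jacobi_def lap_lin by (auto simp: algebra_simps)

lemma l2_infsum_zero: assumes "u \<in> l2" "infsum (\<lambda>k. (norm (u k))\<^sup>2) UNIV = 0"
  shows "u = (\<lambda>_. 0)"
proof
  fix k
  have "(norm (u k))\<^sup>2 = 0"
    by (rule nonneg_infsum_le_0D[where A=UNIV]) (use assms in \<open>auto simp: l2_def\<close>)
  then show "u k = 0" by simp
qed

lemma scalar_lemma:
  fixes z c e :: complex and N :: real
  assumes N: "N > 0" and c: "c \<noteq> 0"
  shows "\<exists>r>0. \<forall>p. cmod (p - z) < r \<longrightarrow>
     (\<exists>\<alpha> \<beta>. \<alpha> * cnj \<alpha> + \<beta> * cnj \<beta> * of_real N = 1 \<and> p = \<alpha> * cnj \<alpha> * z + \<beta> * cnj \<alpha> * c + \<beta> * cnj \<beta> * e)"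
proof -
  define C where "C = cmod c / sqrt N"
  define E where "E = e / of_real N - z"
  define s0 where "s0 = min (1/2) (C / (4 * (cmod E + 1)))"
  have C0: "C > 0" using N c by (simp add: C_def)
  have s00: "s0 > 0" using C0 by (simp add: s0_def) (smt (verit) divide_pos_pos norm_ge_zero)
  have s01: "s0 \<le> 1/2" unfolding s0_def by (rule min.cobounded1)
  have s0E: "s0 * cmod E \<le> C / 4"
  proof -
    have "s0 \<le> C / (4 * (cmod E + 1))" unfolding s0_def by (rule min.cobounded2)
    then have "s0 * cmod E \<le> C / (4 * (cmod E + 1)) * cmod E" by (rule mult_right_mono) simp
    also have "\<dots> = C / 4 * (cmod E / (cmod E + 1))" by simp
    also have "\<dots> \<le> C / 4 * 1"
    proof (rule mult_left_mono)
      have "cmod E \<le> cmod E + 1" by simp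
      then show "cmod E / (cmod E + 1) \<le> 1"
        by (metis divide_le_eq_1 norm_ge_zero add_nonneg_pos zero_less_one)
    qed (use C0 in auto)
    also have "\<dots> = C / 4" by simp
    finally show ?thesis .
  qed
  show ?thesis
  proof (intro exI[of _ "s0 * C / 4"] conjI allI impI)
    show "s0 * C / 4 > 0" using s00 C0 by simp
    fix p assume pz: "cmod (p - z) < s0 * C / 4"
    define q where "q = p - z"
    define h where "h = (\<lambda>s::real. s * sqrt (1 - s\<^sup>2) * C - cmod (q - of_real (s\<^sup>2) * E))"
    have cont: "continuous_on {0..s0} h" unfolding h_def by (intro continuous_intros)
    have h0: "h 0 \<le> 0" by (simp add: h_def)
    have hs0: "0 \<le> h s0"
    proof -
      have "1/2 \<le> sqrt (1 - s0\<^sup>2)"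
      proof (rule real_le_rsqrt)
        have "s0\<^sup>2 \<le> (1/2)\<^sup>2" using s00 s01 by (intro power_mono) auto
        then show "(1/2)\<^sup>2 \<le> 1 - s0\<^sup>2" by (simp add: power2_eq_square)
      qed
      then have a: "s0 * C / 2 \<le> s0 * sqrt (1 - s0\<^sup>2) * C"
        using s00 C0 by (simp add: mult_left_mono mult_right_mono)
      have "cmod (q - of_real (s0\<^sup>2) * E) \<le> cmod q + cmod (of_real (s0\<^sup>2) * E)"
        by (rule norm_triangle_ineq4)
      also have "cmod (of_real (s0\<^sup>2) * E) = s0 * (s0 * cmod E)"
        by (simp add: norm_mult power2_eq_square)
      also have "s0 * (s0 * cmod E) \<le> s0 * (C/4)" using s0E s00 by (simp add: mult_left_mono)
      finally have b: "cmod (q - of_real (s0\<^sup>2) * E) \<le> cmod q + s0 * (C / 4)" by simp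
      show ?thesis using a b pz unfolding h_def q_def by simp
    qed
    obtain s where s: "0 \<le> s" "s \<le> s0" "h s = 0"
      using IVT'[of h 0 0 s0, OF h0 hs0 _ cont] s00 by auto
    have s1: "s\<^sup>2 \<le> 1" using s s01 by (intro power_le_one) auto
    define a where "a = sqrt (1 - s\<^sup>2)"
    have a0: "a \<ge> 0" and a2: "a\<^sup>2 = 1 - s\<^sup>2" using s1 by (auto simp: a_def)
    define D where "D = of_real (s * a / sqrt N) * c"
    define R where "R = q - of_real (s\<^sup>2) * E"
    have "cmod D = \<bar>s * a / sqrt N\<bar> * cmod c"
      unfolding D_def by (simp only: norm_mult norm_of_real)
    also have "\<bar>s * a / sqrt N\<bar> = s * a / sqrt N" using s(1) a0 N by simp
    also have "s * a / sqrt N * cmod c = s * a * C" by (simp add: C_def)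
    also have "\<dots> = cmod R" using s(3) unfolding h_def R_def a_def by simp
    finally have DR: "cmod D = cmod R" .
    define \<omega> where "\<omega> = (if D = 0 then 1 else R / D)"
    have \<omega>1: "cmod \<omega> = 1" using DR by (auto simp: \<omega>_def norm_divide)
    have D\<omega>: "D * \<omega> = R" using DR by (auto simp: \<omega>_def)
    have \<omega>c: "\<omega> * cnj \<omega> = 1" using \<omega>1 by (metis complex_norm_square of_real_1 power_one)
    define \<alpha> where "\<alpha> = complex_of_real a"
    define \<beta> where "\<beta> = of_real (s / sqrt N) * \<omega>"
    have aa: "\<alpha> * cnj \<alpha> = of_real (1 - s\<^sup>2)"
    proof -
      have "\<alpha> * cnj \<alpha> = of_real (a * a)" unfolding \<alpha>_def by simp
      also have "a * a = 1 - s\<^sup>2" using a2 by (simp add: power2_eq_square)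
      finally show ?thesis .
    qed
    have bb: "\<beta> * cnj \<beta> = of_real (s\<^sup>2 / N)"
    proof -
      have "\<beta> * cnj \<beta> = of_real (s / sqrt N) * of_real (s / sqrt N) * (\<omega> * cnj \<omega>)"
        unfolding \<beta>_def by (simp add: algebra_simps)
      also have "\<dots> = of_real (s\<^sup>2 / N)" using N \<omega>c
        by (simp add: power2_eq_square real_sqrt_mult[symmetric] flip: of_real_mult)
      finally show ?thesis .
    qed
    have ba: "\<beta> * cnj \<alpha> * c = D * \<omega>"
      unfolding \<beta>_def \<alpha>_def D_def by (simp add: algebra_simps)
    show "\<exists>\<alpha> \<beta>. \<alpha> * cnj \<alpha> + \<beta> * cnj \<beta> * of_real N = 1 \<and> p = \<alpha> * cnj \<alpha> * z + \<beta> * cnj \<alpha> * c + \<beta> * cnj \<beta> * e"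
    proof (intro exI conjI)
      show "\<alpha> * cnj \<alpha> + \<beta> * cnj \<beta> * of_real N = 1"
        unfolding aa bb using N by (simp flip: of_real_mult of_real_add)
      have "\<alpha> * cnj \<alpha> * z + \<beta> * cnj \<alpha> * c + \<beta> * cnj \<beta> * e
          = of_real (1 - s\<^sup>2) * z + R + of_real (s\<^sup>2 / N) * e"
        unfolding aa bb ba D\<omega> ..
      also have "\<dots> = p" unfolding R_def q_def E_def using N
        by (simp add: field_simps)
      finally show "p = \<alpha> * cnj \<alpha> * z + \<beta> * cnj \<alpha> * c + \<beta> * cnj \<beta> * e" ..
    qed
  qed
qed

lemma jacobi_scale: "jacobi d (\<lambda>k. p * u k) = (\<lambda>k. p * jacobi d u k)"
  using jacobi_lin[of d p u 0 u] by simp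

lemma inner_scale: "u \<in> l2 \<Longrightarrow> v \<in> l2 \<Longrightarrow> l2_inner (\<lambda>k. p * u k) v = p * l2_inner u v"
  using inner_lin[of u u v p 0] by simp

lemma key_lemma:
  fixes d u w :: "int ^ 'n \<Rightarrow> complex"
  assumes u: "u \<in> l2" and w: "w \<in> l2" and Jw: "jacobi d w \<in> l2"
    and Ju: "jacobi d u = (\<lambda>k. z * u k)" and uu: "l2_inner u u = 1" and wu: "l2_inner w u = 0"
    and fr: "z \<in> frontier (numerical_range (jacobi d))"
  shows "l2_inner (jacobi d w) u = 0"
proof (rule ccontr)
  define c where "c = l2_inner (jacobi d w) u"
  define e where "e = l2_inner (jacobi d w) w"
  assume "l2_inner (jacobi d w) u \<noteq> 0"
  then have c0: "c \<noteq> 0" by (simp add: c_def)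
  define N where "N = infsum (\<lambda>k. (norm (w k))\<^sup>2) UNIV"
  have N0: "N \<ge> 0" unfolding N_def by (rule infsum_nonneg) simp
  have "N \<noteq> 0"
  proof
    assume "N = 0"
    then have "w = (\<lambda>_. 0)" using l2_infsum_zero[OF w] by (simp add: N_def)
    then have "jacobi d w = (\<lambda>_. 0)" unfolding jacobi_def lap_def by simp
    then show False using c0 by (simp add: c_def inner_zero)
  qed
  then have N: "N > 0" using N0 by simp
  have ww: "l2_inner w w = of_real N" using inner_self[OF w] by (simp add: N_def)
  have uw: "l2_inner u w = 0" using wu inner_cnj[of u w] by simp
  obtain r where r: "r > 0" and rr: "\<And>p. cmod (p - z) < r \<Longrightarrow>
     (\<exists>\<alpha> \<beta>. \<alpha> * cnj \<alpha> + \<beta> * cnj \<beta> * of_real N = 1 \<and> p = \<alpha> * cnj \<alpha> * z + \<beta> * cnj \<alpha> * c + \<beta> * cnj \<beta> * e)"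
    using scalar_lemma[OF N c0, of z e] by blast
  have "ball z r \<subseteq> numerical_range (jacobi d)"
  proof
    fix p assume "p \<in> ball z r"
    then have "cmod (p - z) < r" by (simp add: dist_norm norm_minus_commute)
    then obtain \<alpha> \<beta> where ab: "\<alpha> * cnj \<alpha> + \<beta> * cnj \<beta> * of_real N = 1"
      and p: "p = \<alpha> * cnj \<alpha> * z + \<beta> * cnj \<alpha> * c + \<beta> * cnj \<beta> * e" using rr by blast
    define x where "x = (\<lambda>k. \<alpha> * u k + \<beta> * w k)"
    have x: "x \<in> l2" unfolding x_def by (rule l2_lin[OF u w])
    have Jx: "jacobi d x = (\<lambda>k. (\<alpha> * z) * u k + \<beta> * jacobi d w k)"
      unfolding x_def jacobi_lin Ju by (simp add: mult.assoc)
    have ux: "l2_inner u x = cnj \<alpha>"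
      unfolding x_def using inner_lin2[OF u w u, of \<alpha> \<beta>] uu uw by simp
    have wx: "l2_inner w x = cnj \<beta> * of_real N"
      unfolding x_def using inner_lin2[OF u w w, of \<alpha> \<beta>] wu ww by simp
    have Jwx: "l2_inner (jacobi d w) x = cnj \<alpha> * c + cnj \<beta> * e"
      unfolding x_def using inner_lin2[OF u w Jw, of \<alpha> \<beta>]
      by (simp add: c_def e_def inner_cnj[of "jacobi d w" u] inner_cnj[of "jacobi d w" w])
    have "l2_inner x x = \<alpha> * l2_inner u x + \<beta> * l2_inner w x"
      unfolding x_def by (rule inner_lin[OF u w l2_lin[OF u w]])
    also have "\<dots> = 1" using ab by (simp add: ux wx algebra_simps)
    finally have xx: "l2_inner x x = 1" .
    have "infsum (\<lambda>k. (norm (x k))\<^sup>2) UNIV = 1" using inner_self[OF x] xx by simp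
    then have nx: "l2_norm x = 1" by (simp add: l2_norm_def)
    have "l2_inner (jacobi d x) x = (\<alpha> * z) * l2_inner u x + \<beta> * l2_inner (jacobi d w) x"
      unfolding Jx by (rule inner_lin[OF u Jw x])
    also have "\<dots> = p" unfolding ux Jwx p by (simp add: algebra_simps)
    finally have "l2_inner (jacobi d x) x = p" .
    then show "p \<in> numerical_range (jacobi d)" unfolding numerical_range_def using x nx by blast
  qed
  then have "z \<in> interior (numerical_range (jacobi d))"
    using r by (intro interiorI[OF open_ball]) auto
  then show False using fr by (simp add: frontier_def)
qed


lemma boundary_normal:
  fixes d :: "int ^ 'n \<Rightarrow> complex"
  assumes "boundary_eigenvalue (jacobi d) z"
  shows "\<exists>u\<in>l2. u \<noteq> (\<lambda>_. 0) \<and> (\<forall>k. lap u k + d k * u k = z * u k \<and> lap u k + cnj (d k) * u k = cnj z * u k)"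
proof -
  obtain u0 where u0: "u0 \<in> l2" "u0 \<noteq> (\<lambda>_. 0)" and Ju0: "jacobi d u0 = (\<lambda>k. z * u0 k)"
    and fr: "z \<in> frontier (numerical_range (jacobi d))"
    using assms unfolding boundary_eigenvalue_def is_eigenvalue_def by blast
  define M where "M = infsum (\<lambda>k. (norm (u0 k))\<^sup>2) UNIV"
  have M0: "M \<ge> 0" unfolding M_def by (rule infsum_nonneg) simp
  have "M \<noteq> 0" using l2_infsum_zero[OF u0(1)] u0(2) by (auto simp: M_def)
  then have M: "M > 0" using M0 by simp
  define p where "p = complex_of_real (1 / sqrt M)"
  define u where "u = (\<lambda>k. p * u0 k)"
  have u: "u \<in> l2" unfolding u_def by (rule l2_scale[OF u0(1)])
  have Ju: "jacobi d u = (\<lambda>k. z * u k)" unfolding u_def jacobi_scale Ju0 by (simp add: algebra_simps)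
  have "l2_inner u u = p * cnj p * of_real M"
    unfolding u_def using inner_scale[OF u0(1) u] inner_lin2[OF u0(1) u0(1) u0(1), of p 0]
      inner_self[OF u0(1)] by (simp add: M_def u_def)
  also have "\<dots> = of_real (1 / sqrt M * (1 / sqrt M) * M)"
    unfolding p_def by (simp only: complex_cnj_complex_of_real of_real_mult)
  also have "1 / sqrt M * (1 / sqrt M) * M = 1"
  proof -
    have "sqrt M * sqrt M = M" using M by simp
    then show ?thesis using M by (simp add: field_simps)
  qed
  finally have uu: "l2_inner u u = 1" by simp
  have unz: "u \<noteq> (\<lambda>_. 0)" using uu inner_zero[of u] by auto
  have Jlin: "\<And>k. jacobi d u k = z * u k" using Ju by metis
  define L where "L = {l :: int ^ 'n. (\<Sum>i\<in>UNIV. \<bar>l $ i\<bar>) = 1}"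
  have lapL: "lap f k = (\<Sum>l\<in>L. f (k + l))" for f k unfolding lap_def L_def ..
  have refl: "(\<Sum>l\<in>L. f (k - l)) = (\<Sum>l\<in>L. f (k + l))" for f :: "int ^ 'n \<Rightarrow> complex" and k
    by (rule sum.reindex_bij_witness[where i=uminus and j=uminus]) (auto simp: L_def)
  have eqs: "lap u k + cnj (d k) * u k = cnj z * u k" for k
  proof -
    define \<delta> :: "int ^ 'n \<Rightarrow> int ^ 'n \<Rightarrow> complex" where "\<delta> = (\<lambda>m j. if j = m then (1::complex) else 0)"
    have dl2: "\<delta> m \<in> l2" for m unfolding \<delta>_def by (rule l2_delta)
    have di: "l2_inner (\<delta> m) v = cnj (v m)" for m v unfolding \<delta>_def by (rule inner_delta)
    define S where "S = (\<lambda>j. \<Sum>l\<in>L. \<delta> (k - l) j)"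
    have Sl2: "S \<in> l2" unfolding S_def by (rule l2_sum) (rule dl2)
    have JD: "jacobi d (\<delta> k) = (\<lambda>j. 1 * S j + d k * \<delta> k j)"
    proof
      fix j
      have "lap (\<delta> k) j = S j" unfolding lapL S_def \<delta>_def
        by (rule sum.cong) (auto simp: eq_diff_eq)
      moreover have "d j * \<delta> k j = d k * \<delta> k j" by (simp add: \<delta>_def)
      ultimately show "jacobi d (\<delta> k) j = 1 * S j + d k * \<delta> k j" by (simp add: jacobi_def)
    qed
    have JDl2: "jacobi d (\<delta> k) \<in> l2" unfolding JD by (rule l2_lin[OF Sl2 dl2])
    have JDu: "l2_inner (jacobi d (\<delta> k)) u = (\<Sum>l\<in>L. cnj (u (k - l))) + d k * cnj (u k)"
    proof -
      have "l2_inner (jacobi d (\<delta> k)) u = 1 * l2_inner S u + d k * l2_inner (\<delta> k) u"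
        unfolding JD by (rule inner_lin[OF Sl2 dl2 u])
      moreover have "l2_inner S u = (\<Sum>l\<in>L. l2_inner (\<delta> (k - l)) u)"
        unfolding S_def by (rule inner_sum[OF dl2 u])
      ultimately show ?thesis by (simp add: di)
    qed
    define w where "w = (\<lambda>j. 1 * \<delta> k j + (- cnj (u k)) * u j)"
    have w: "w \<in> l2" unfolding w_def by (rule l2_lin[OF dl2 u])
    have wu: "l2_inner w u = 0" unfolding w_def inner_lin[OF dl2 u u] di uu by simp
    have zu: "(\<lambda>j. z * u j) \<in> l2" by (rule l2_scale[OF u])
    have Jw: "jacobi d w = (\<lambda>j. 1 * jacobi d (\<delta> k) j + (- cnj (u k)) * (z * u j))"
      unfolding w_def jacobi_lin Ju ..
    have Jwl2: "jacobi d w \<in> l2" unfolding Jw by (rule l2_lin[OF JDl2 zu])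
    have "l2_inner (jacobi d w) u = 0" by (rule key_lemma[OF u w Jwl2 Ju uu wu fr])
    moreover have "l2_inner (jacobi d w) u = l2_inner (jacobi d (\<delta> k)) u - cnj (u k) * z"
      unfolding Jw inner_lin[OF JDl2 zu u] inner_scale[OF u u] uu by simp
    ultimately have "(\<Sum>l\<in>L. cnj (u (k - l))) + d k * cnj (u k) - cnj (u k) * z = 0"
      unfolding JDu by simp
    then have "cnj ((\<Sum>l\<in>L. u (k - l)) + cnj (d k) * u k - u k * cnj z) = 0" by simp
    then have "(\<Sum>l\<in>L. u (k - l)) + cnj (d k) * u k - u k * cnj z = 0"
      by (simp only: complex_cnj_zero_iff)
    then show ?thesis unfolding lapL refl by (simp add: algebra_simps)
  qed
  show ?thesis
    using u unz Jlin eqs by (auto simp: jacobi_def)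
qed


theorem mainTheorem3:
  fixes d :: "int ^ 'n \<Rightarrow> complex"
  assumes "bounded (range d)"
  shows "(\<forall>a::real. \<not> is_eigenvalue (jacobi (\<lambda>k. complex_of_real (Re (d k)))) (complex_of_real a)
            \<longrightarrow> \<not> (\<exists>z. boundary_eigenvalue (jacobi d) z \<and> Re z = a))
       \<and> (\<forall>b::real. (\<forall>k. Im (d k) \<noteq> b)
            \<longrightarrow> \<not> (\<exists>z. boundary_eigenvalue (jacobi d) z \<and> Im z = b))"
proof (intro conjI allI impI notI)
  fix a :: real
  assume ne: "\<not> is_eigenvalue (jacobi (\<lambda>k. complex_of_real (Re (d k)))) (complex_of_real a)"
  assume "\<exists>z. boundary_eigenvalue (jacobi d) z \<and> Re z = a"
  then obtain z where bz: "boundary_eigenvalue (jacobi d) z" and za: "Re z = a" by blast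
  obtain u where u: "u \<in> l2" "u \<noteq> (\<lambda>_. 0)" and
    e: "\<And>k. lap u k + d k * u k = z * u k" "\<And>k. lap u k + cnj (d k) * u k = cnj z * u k"
    using boundary_normal[OF bz] by blast
  have "jacobi (\<lambda>k. complex_of_real (Re (d k))) u = (\<lambda>k. complex_of_real a * u k)"
  proof
    fix k
    have "(lap u k + d k * u k) + (lap u k + cnj (d k) * u k) = z * u k + cnj z * u k"
      using e[of k] by simp
    then have "2 * lap u k + (d k + cnj (d k)) * u k = (z + cnj z) * u k"
      by (simp add: algebra_simps)
    then have "2 * lap u k + 2 * complex_of_real (Re (d k)) * u k = 2 * complex_of_real (Re z) * u k"
      by (simp add: complex_add_cnj)
    then have "2 * (lap u k + complex_of_real (Re (d k)) * u k) = 2 * (complex_of_real (Re z) * u k)"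
      by (simp add: algebra_simps)
    then have "lap u k + complex_of_real (Re (d k)) * u k = complex_of_real (Re z) * u k"
      by (rule mult_left_cancel[THEN iffD1, rotated]) simp
    then show "jacobi (\<lambda>k. complex_of_real (Re (d k))) u k = complex_of_real a * u k"
      using za by (simp add: jacobi_def)
  qed
  then have "is_eigenvalue (jacobi (\<lambda>k. complex_of_real (Re (d k)))) (complex_of_real a)"
    unfolding is_eigenvalue_def using u by blast
  then show False using ne by blast
next
  fix b :: real
  assume nb: "\<forall>k. Im (d k) \<noteq> b"
  assume "\<exists>z. boundary_eigenvalue (jacobi d) z \<and> Im z = b"
  then obtain z where bz: "boundary_eigenvalue (jacobi d) z" and zb: "Im z = b" by blast
  obtain u where u: "u \<in> l2" "u \<noteq> (\<lambda>_. 0)" and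
    e: "\<And>k. lap u k + d k * u k = z * u k" "\<And>k. lap u k + cnj (d k) * u k = cnj z * u k"
    using boundary_normal[OF bz] by blast
  obtain k where uk: "u k \<noteq> 0" using u(2) by auto
  have "(d k - cnj (d k)) * u k = (lap u k + d k * u k) - (lap u k + cnj (d k) * u k)"
    by (simp add: algebra_simps)
  also have "\<dots> = z * u k - cnj z * u k" using e[of k] by simp
  also have "\<dots> = (z - cnj z) * u k" by (simp add: algebra_simps)
  finally have "(d k - cnj (d k)) * u k = (z - cnj z) * u k" .
  then have "d k - cnj (d k) = z - cnj z" using uk by simp
  then have "Im (d k) = Im z" by (simp add: complex_diff_cnj)
  then show False using nb zb by simp
qed

end
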